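(* There exists $K_0>0$ such that for every $R>2$ and every $y\in[2,3]$, the function $x\mapsto\sqrt{\iota_R(x,y)}$ is continuously differentiable on $[0,\infty)$ and for all $x\ge0$, $$0\le\partial_x\sqrt{\iota_R(x,y)}\le K_0\sqrt{y-2}\,g_R(x,y),\qquad 0\le\sqrt{\iota_R(x,y)}\le K_0\sqrt{y-2}\,\rho_R(x,y).$$
   Context: Let $\xi$ be a nondecreasing $C^2$ function on $[0,\infty)$ with $\xi(x)=(x-1)^3\vee0$ for $x\in[0,3/2]$ and $\xi(x)=1$ for $x\ge2$. For $x\ge0$, $y\ge2$: $\zeta(x,y)=2x+(yx^{y-1}-2x)\xi(x)$. For $R>2$: $g_R(x,y)=\sqrt{(\partial_x\zeta)(x\wedge R,y)}$, $h_R(x,y)=\int_0^xg_R(s,y)^2\,ds$, $\phi_R(x,y)=\int_0^xh_R(s,y)\,ds$, $\rho_R(x,y)=\int_0^xg_R(s,y)\,ds$, $\iota_R(x,y)=xh_R(x,y)-2\phi_R(x,y)$. *)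

theory Defs
  imports "HOL-Analysis.Analysis"
begin

text \<open>The cutoff function xi is a parameter; its hypotheses are stated in the theorem.
  All functions below are only meaningful for x \<ge> 0, y \<ge> 2.\<close>

definition zeta :: "(real \<Rightarrow> real) \<Rightarrow> real \<Rightarrow> real \<Rightarrow> real" where
  "zeta xi x y = 2 * x + (y * x powr (y - 1) - 2 * x) * xi x"

definition dzeta :: "(real \<Rightarrow> real) \<Rightarrow> real \<Rightarrow> real \<Rightarrow> real" where
  "dzeta xi x y = (THE D. ((\<lambda>s. zeta xi s y) has_real_derivative D) (at x within {0..}))"

definition gR :: "(real \<Rightarrow> real) \<Rightarrow> real \<Rightarrow> real \<Rightarrow> real \<Rightarrow> real" where
  "gR xi R x y = sqrt (dzeta xi (min x R) y)"

definition hR :: "(real \<Rightarrow> real) \<Rightarrow> real \<Rightarrow> real \<Rightarrow> real \<Rightarrow> real" where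
  "hR xi R x y = integral {0..x} (\<lambda>s. (gR xi R s y)\<^sup>2)"

definition phiR :: "(real \<Rightarrow> real) \<Rightarrow> real \<Rightarrow> real \<Rightarrow> real \<Rightarrow> real" where
  "phiR xi R x y = integral {0..x} (\<lambda>s. hR xi R s y)"

definition rhoR :: "(real \<Rightarrow> real) \<Rightarrow> real \<Rightarrow> real \<Rightarrow> real \<Rightarrow> real" where
  "rhoR xi R x y = integral {0..x} (\<lambda>s. gR xi R s y)"

definition iotaR :: "(real \<Rightarrow> real) \<Rightarrow> real \<Rightarrow> real \<Rightarrow> real \<Rightarrow> real" where
  "iotaR xi R x y = x * hR xi R x y - 2 * phiR xi R x y"

end

theory Submission
  imports Defs
begin

lemma deriv_unique_Icc:
  fixes f g :: "real \<Rightarrow> real"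
  assumes "a < b" "x \<in> {a..b}"
    and "(f has_real_derivative D1) (at x within {a..b})"
    and "(g has_real_derivative D2) (at x within {a..b})"
    and "\<And>s. s \<in> {a..b} \<Longrightarrow> f s = g s"
  shows "D1 = D2"
proof -
  have "(g has_real_derivative D1) (at x within {a..b})"
    by (rule has_field_derivative_transform_within[OF assms(3), of 1]) (use assms in auto)
  then show ?thesis using assms(4) vector_derivative_unique_within_closed_interval[of a b x g D1 D2] assms(1,2)
    by (simp add: has_real_derivative_iff_has_vector_derivative)
qed

lemma within_Icc_to_Ici:
  fixes f :: "real \<Rightarrow> real"
  assumes "0 \<le> x" "x < b" "(f has_real_derivative D) (at x within {0..b})"
  shows "(f has_real_derivative D) (at x within {0..})"
proof (cases "x = 0")
  case True
  have "at x within {0..b} = at x within {0..}" using assms(2) True by (metis at_within_Icc_at_right at_within_Ici_at_right)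
  then show ?thesis using assms(3) by simp
next
  case False
  then have "at x within {0..b} = at x" using assms by (intro at_within_interior) auto
  then show ?thesis using assms by (simp add: has_field_derivative_at_within)
qed

lemma within_Ici_to_at:
  fixes f :: "real \<Rightarrow> real"
  assumes "0 < x" "(f has_real_derivative D) (at x within {0..})"
  shows "(f has_real_derivative D) (at x)"
proof -
  have "at x within {0..} = at x" using assms by (intro at_within_interior) auto
  then show ?thesis using assms by simp
qed

lemma deriv_compare:
  fixes f g f' g' :: "real \<Rightarrow> real"
  assumes "a \<le> b" "continuous_on {a..b} f" "continuous_on {a..b} g"
    and "\<And>t. a < t \<Longrightarrow> t < b \<Longrightarrow> (f has_real_derivative f' t) (at t)"
    and "\<And>t. a < t \<Longrightarrow> t < b \<Longrightarrow> (g has_real_derivative g' t) (at t)"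
    and "\<And>t. a < t \<Longrightarrow> t < b \<Longrightarrow> f' t \<le> g' t"
  shows "f b - f a \<le> g b - g a"
proof -
  have "(\<lambda>t. g t - f t) a \<le> (\<lambda>t. g t - f t) b"
  proof (rule DERIV_nonneg_imp_increasing_open[OF assms(1)])
    fix t assume "a < t" "t < b"
    then show "\<exists>y. ((\<lambda>t. g t - f t) has_real_derivative y) (at t) \<and> 0 \<le> y"
      using assms(4-6) by (intro exI[of _ "g' t - f' t"]) (auto intro: derivative_intros)
  next
    show "continuous_on {a..b} (\<lambda>t. g t - f t)" using assms(2,3) by (intro continuous_intros)
  qed
  then show ?thesis by simp
qed

locale L =
  fixes xi xi' :: "real \<Rightarrow> real"
  assumes mono: "mono_on {0..} xi"
    and dxi: "\<And>x. 0 \<le> x \<Longrightarrow> (xi has_real_derivative xi' x) (at x within {0..})"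
    and cxi': "continuous_on {0..} xi'"
    and low: "\<And>x. 0 \<le> x \<Longrightarrow> x \<le> 3/2 \<Longrightarrow> xi x = max ((x - 1) ^ 3) 0"
    and high: "\<And>x. 2 \<le> x \<Longrightarrow> xi x = 1"
begin

lemma xi0: "0 \<le> x \<Longrightarrow> x \<le> 1 \<Longrightarrow> xi x = 0"
proof -
  assume a: "0 \<le> x" "x \<le> 1"
  have "0 \<le> (1-x)^3" using a by simp
  moreover have "(x-1)^3 = -((1-x)^3)" by (simp add: power3_eq_cube algebra_simps)
  ultimately show ?thesis using low[of x] a by auto
qed

lemma xi_cube: "1 \<le> x \<Longrightarrow> x \<le> 3/2 \<Longrightarrow> xi x = (x-1)^3"
  using low[of x] by auto

lemma xi_nonneg: "0 \<le> x \<Longrightarrow> 0 \<le> xi x"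
  using mono_onD[OF mono, of 0 x] xi0[of 0] by auto

lemma xi_le1: "0 \<le> x \<Longrightarrow> xi x \<le> 1"
proof (cases "x \<le> 2")
  case True
  assume "0 \<le> x" then show ?thesis using mono_onD[OF mono, of x 2] high[of 2] True by auto
qed (use high in auto)

lemma xi_ge: "3/2 \<le> x \<Longrightarrow> 1/8 \<le> xi x"
  using mono_onD[OF mono, of "3/2" x] xi_cube[of "3/2"] by (auto simp: power3_eq_cube)

lemma xi_cont: "continuous_on {0..} xi"
  unfolding continuous_on_eq_continuous_within using dxi DERIV_continuous by blast

lemma dxi_Icc: "0 \<le> a \<Longrightarrow> x \<in> {a..b} \<Longrightarrow> (xi has_real_derivative xi' x) (at x within {a..b})"
  by (rule DERIV_subset[OF dxi]) auto

lemma xi'_zero: "0 \<le> x \<Longrightarrow> x \<le> 1 \<Longrightarrow> xi' x = 0"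
  by (rule deriv_unique_Icc[of 0 1 x xi _ "\<lambda>_. 0"]) (auto intro!: dxi_Icc xi0)

lemma xi'_cube: "1 \<le> x \<Longrightarrow> x \<le> 3/2 \<Longrightarrow> xi' x = 3*(x-1)^2"
  by (rule deriv_unique_Icc[of 1 "3/2" x xi _ "\<lambda>x. (x-1)^3"])
     (auto intro!: dxi_Icc xi_cube derivative_eq_intros)

lemma xi'_high: "2 \<le> x \<Longrightarrow> xi' x = 0"
  by (rule deriv_unique_Icc[of x "x+1" x xi _ "\<lambda>_. 1"]) (auto intro!: dxi_Icc high)

lemma xi'_nonneg: "0 \<le> x \<Longrightarrow> 0 \<le> xi' x"
proof (cases "x = 0")
  case True then show ?thesis using xi'_zero by simp
next
  case False
  assume "0 \<le> x"
  then have "(xi has_real_derivative xi' x) (at x)" using False dxi within_Ici_to_at by auto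
  then show ?thesis using mono_on_imp_deriv_nonneg[OF mono] \<open>0 \<le> x\<close> False by auto
qed

lemma xi'_bound: "\<exists>M\<ge>0. \<forall>x\<in>{0..2}. xi' x \<le> M"
proof -
  have "compact (xi' ` {0..2})"
    by (rule compact_continuous_image) (auto intro: continuous_on_subset[OF cxi'])
  then obtain B where "\<forall>v\<in>xi' ` {0..2}. norm v \<le> B" using compact_imp_bounded bounded_iff by metis
  then show ?thesis by (intro exI[of _ "max B 0"]) force
qed

end


locale L2 = L +
  fixes y R M :: real
  assumes y2: "2 \<le> y" and y3: "y \<le> 3" and R2: "2 < R"
    and M0: "0 \<le> M" and Mb: "\<And>x. 0 \<le> x \<Longrightarrow> x \<le> 2 \<Longrightarrow> xi' x \<le> M"
begin

definition Z :: "real \<Rightarrow> real" where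
  "Z t = 2 + (y*(y-1)*t powr (y-2) - 2)*xi t + (y * t powr (y-1) - 2*t) * xi' t"

lemma Z_small: "0 \<le> t \<Longrightarrow> t \<le> 1 \<Longrightarrow> Z t = 2"
  unfolding Z_def using xi0 xi'_zero by simp

lemma zeta_small: "0 \<le> t \<Longrightarrow> t \<le> 1 \<Longrightarrow> zeta xi t y = 2*t"
  unfolding zeta_def using xi0 by simp

lemma zeta_deriv: assumes "0 \<le> t" shows "((\<lambda>s. zeta xi s y) has_real_derivative Z t) (at t within {0..})"
proof (cases "t = 0")
  case True
  have "((\<lambda>u::real. 2 * u) has_real_derivative 2) (at t within {0..})"
    using DERIV_cmult_Id[of 2] has_field_derivative_at_within by blast
  then have "((\<lambda>s. zeta xi s y) has_real_derivative 2) (at t within {0..})"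
    by (rule has_field_derivative_transform_within[where d=1]) (use True zeta_small in \<open>auto simp: dist_real_def\<close>)
  then show ?thesis using Z_small True by simp
next
  case False
  then have tp: "0 < t" using assms by simp
  have pw: "((\<lambda>s. s powr (y-1)) has_real_derivative (y-1) * t powr (y-1-1)) (at t within {0..})"
    by (rule has_field_derivative_at_within[OF has_real_derivative_powr[OF tp]])
  have d1: "((\<lambda>s. y * s powr (y-1) - 2 * s) has_real_derivative y*((y-1)*t powr (y-1-1)) - 2) (at t within {0..})"
    by (intro derivative_eq_intros pw) (use tp in auto)
  have d2: "((\<lambda>s. (y * s powr (y-1) - 2 * s) * xi s) has_real_derivative
     (y*((y-1)*t powr (y-1-1)) - 2) * xi t + (y * t powr (y-1) - 2 * t) * xi' t) (at t within {0..})"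
    by (rule DERIV_cong[OF DERIV_mult[OF d1 dxi[OF assms]]]) (simp add: algebra_simps)
  have d3: "((\<lambda>u::real. 2 * u) has_real_derivative 2) (at t within {0..})"
    using DERIV_cmult_Id[of 2] has_field_derivative_at_within by blast
  have "((\<lambda>s. 2 * s + (y * s powr (y-1) - 2 * s) * xi s) has_real_derivative
      2 + ((y*((y-1)*t powr (y-1-1)) - 2) * xi t + (y * t powr (y-1) - 2 * t) * xi' t)) (at t within {0..})"
    by (rule DERIV_add[OF d3 d2])
  moreover have "y-1-1 = y-2" by simp
  ultimately show ?thesis unfolding zeta_def Z_def by (simp add: algebra_simps)
qed

lemma dzeta_eq: assumes "0 \<le> t" shows "dzeta xi t y = Z t"
  unfolding dzeta_def
proof (rule the_equality)
  show "((\<lambda>s. zeta xi s y) has_real_derivative Z t) (at t within {0..})" by (rule zeta_deriv[OF assms])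
next
  fix D assume "((\<lambda>s. zeta xi s y) has_real_derivative D) (at t within {0..})"
  then have "((\<lambda>s. zeta xi s y) has_real_derivative D) (at t within {t..t+1})"
    by (rule DERIV_subset) (use assms in auto)
  moreover have "((\<lambda>s. zeta xi s y) has_real_derivative Z t) (at t within {t..t+1})"
    by (rule DERIV_subset[OF zeta_deriv[OF assms]]) (use assms in auto)
  ultimately show "D = Z t" by (intro deriv_unique_Icc[of t "t+1" t "\<lambda>s. zeta xi s y" D "\<lambda>s. zeta xi s y" "Z t"]) auto
qed

lemma P_ge1: "1 \<le> t \<Longrightarrow> 1 \<le> t powr (y-2)"
  using y2 by (intro ge_one_powr_ge_zero) auto

lemma powr_split: "0 \<le> t \<Longrightarrow> t powr (y-1) = t * t powr (y-2)"
proof (cases "t = 0")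
  case False
  assume "0 \<le> t"
  have "y - 1 = 1 + (y-2)" by simp
  then have "t powr (y-1) = t powr 1 * t powr (y-2)" using powr_add[of t 1 "y-2"] by metis
  then show ?thesis using \<open>0\<le>t\<close> by simp
qed simp

lemma Z_ge2: assumes "0 \<le> t" shows "2 \<le> Z t"
proof (cases "t \<le> 1")
  case True then show ?thesis using Z_small assms by simp
next
  case False
  have P: "1 \<le> t powr (y-2)" using P_ge1 False by simp
  have "2 \<le> y*(y-1)*t powr (y-2)"
  proof -
    have "2 \<le> y*(y-1)" using y2 mult_mono[of 2 y 1 "y-1"] by simp
    also have "\<dots> \<le> y*(y-1)*t powr (y-2)" using mult_left_mono[OF P, of "y*(y-1)"] y2 by simp
    finally show ?thesis .
  qed
  then have a: "0 \<le> (y*(y-1)*t powr (y-2) - 2)*xi t" using xi_nonneg assms by simp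
  have "t*1 \<le> t*t powr (y-2)" using mult_left_mono[OF P, of t] False by simp
  then have "2*t \<le> y*(t*t powr (y-2))" using y2 False mult_mono[of 2 y t "t*t powr (y-2)"] by simp
  then have b: "0 \<le> (y * t powr (y-1) - 2*t) * xi' t" using xi'_nonneg assms powr_split by simp
  show ?thesis unfolding Z_def using a b by simp
qed

lemma Z_cont: "continuous_on {0..} Z"
proof -
  have "continuous_on {0..1} Z"
    by (rule continuous_on_cong[THEN iffD2, OF refl _ continuous_on_const[of _ 2]]) (auto simp: Z_small)
  moreover have "continuous_on {1..} Z"
    unfolding Z_def
    by (intro continuous_intros continuous_on_subset[OF xi_cont] continuous_on_subset[OF cxi']) auto
  ultimately have "continuous_on ({0..1} \<union> {1..}) Z" by (intro continuous_on_closed_Un) auto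
  moreover have "{0..1} \<union> {1..} = {0::real..}" by auto
  ultimately show ?thesis by simp
qed

end


context L2 begin

definition F :: "real \<Rightarrow> real" where "F s = Z (min s R)"
definition h :: "real \<Rightarrow> real" where "h x = integral {0..x} F"
definition I :: "real \<Rightarrow> real" where "I x = x * h x - 2 * integral {0..x} h"
definition N0 :: "real \<Rightarrow> real" where "N0 t = t * Z t - zeta xi t y"
definition N :: "real \<Rightarrow> real" where "N x = N0 (min x R)"
definition r :: "real \<Rightarrow> real" where "r x = integral {0..x} (\<lambda>s. sqrt (F s))"

lemma F_cont: "continuous_on {0..} F"
  unfolding F_def using R2
  by (intro continuous_on_compose2[OF Z_cont, of "{0..}" "\<lambda>s. min s R"]) (auto intro!: continuous_intros)

lemma F_ge2: "0 \<le> s \<Longrightarrow> 2 \<le> F s"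
  unfolding F_def using Z_ge2 R2 by simp

lemma gR_eq: "0 \<le> s \<Longrightarrow> gR xi R s y = sqrt (F s)"
  unfolding gR_def F_def using dzeta_eq R2 by simp

lemma gR_sq: "0 \<le> s \<Longrightarrow> (gR xi R s y)\<^sup>2 = F s"
  using gR_eq F_ge2[of s] by simp

lemma deriv_int:
  assumes "continuous_on {0..} f" "0 \<le> x"
  shows "((\<lambda>u. integral {0..u} f) has_real_derivative f x) (at x within {0..})"
proof -
  have "continuous_on {0..x+1} f" by (rule continuous_on_subset[OF assms(1)]) auto
  then have "((\<lambda>u. integral {0..u} f) has_vector_derivative f x) (at x within {0..x+1})"
    by (rule integral_has_vector_derivative) (use assms in auto)
  then show ?thesis
    by (intro within_Icc_to_Ici[of x "x+1"]) (use assms in \<open>auto simp: has_real_derivative_iff_has_vector_derivative\<close>)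
qed

lemma cont_from_deriv:
  assumes "\<And>x. 0 \<le> x \<Longrightarrow> (f has_real_derivative f' x) (at x within {0..})"
  shows "continuous_on {0..} f"
  unfolding continuous_on_eq_continuous_within using assms DERIV_continuous by blast

lemma h_deriv: "0 \<le> x \<Longrightarrow> (h has_real_derivative F x) (at x within {0..})"
  unfolding h_def[abs_def] by (rule deriv_int[OF F_cont])

lemma h_cont: "continuous_on {0..} h"
  using h_deriv cont_from_deriv by blast

lemma hR_eq: "0 \<le> x \<Longrightarrow> hR xi R x y = h x"
  unfolding hR_def h_def by (rule integral_cong) (auto simp: gR_sq)

lemma phiR_eq: "0 \<le> x \<Longrightarrow> phiR xi R x y = integral {0..x} h"
  unfolding phiR_def by (rule integral_cong) (auto simp: hR_eq)

lemma iota_eq: "0 \<le> x \<Longrightarrow> iotaR xi R x y = I x"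
  unfolding iotaR_def I_def using hR_eq phiR_eq by simp

lemma rho_eq: "0 \<le> x \<Longrightarrow> rhoR xi R x y = r x"
  unfolding rhoR_def r_def by (rule integral_cong) (auto simp: gR_eq)

lemma r_deriv: "0 \<le> x \<Longrightarrow> (r has_real_derivative sqrt (F x)) (at x within {0..})"
  unfolding r_def[abs_def] by (rule deriv_int) (intro continuous_intros F_cont)

lemma I_deriv0: "0 \<le> x \<Longrightarrow> (I has_real_derivative x * F x - h x) (at x within {0..})"
proof -
  assume x: "0 \<le> x"
  have d: "((\<lambda>u. integral {0..u} h) has_real_derivative h x) (at x within {0..})"
    by (rule deriv_int[OF h_cont x])
  have "((\<lambda>u. u * h u - 2 * integral {0..u} h) has_real_derivative (1 * h x + F x * x) - 2 * h x) (at x within {0..})"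
    by (intro DERIV_diff DERIV_mult DERIV_cmult d h_deriv x DERIV_ident)
  then show ?thesis unfolding I_def[abs_def] by (simp add: algebra_simps)
qed

lemma zeta0: "zeta xi 0 y = 0" by (simp add: zeta_small)

lemma h_explicit: assumes "0 \<le> x" shows "h x = zeta xi (min x R) y + (x - min x R) * Z R"
proof (cases "x \<le> R")
  case True
  have "(Z has_integral (zeta xi x y - zeta xi 0 y)) {0..x}"
    by (rule fundamental_theorem_of_calculus[OF assms])
       (auto simp: has_real_derivative_iff_has_vector_derivative[symmetric] intro!: DERIV_subset[OF zeta_deriv])
  then have "integral {0..x} Z = zeta xi x y" using zeta0 by (simp add: integral_unique)
  moreover have "integral {0..x} F = integral {0..x} Z"
    by (rule integral_cong) (use True in \<open>auto simp: F_def\<close>)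
  ultimately show ?thesis using True unfolding h_def by simp
next
  case False
  have hR: "h R = zeta xi R y"
  proof -
    have "(Z has_integral (zeta xi R y - zeta xi 0 y)) {0..R}"
      by (rule fundamental_theorem_of_calculus) (use R2 in
       \<open>auto simp: has_real_derivative_iff_has_vector_derivative[symmetric] intro!: DERIV_subset[OF zeta_deriv]\<close>)
    then have "integral {0..R} Z = zeta xi R y" using zeta0 by (simp add: integral_unique)
    moreover have "integral {0..R} F = integral {0..R} Z"
      by (rule integral_cong) (auto simp: F_def)
    ultimately show ?thesis unfolding h_def by simp
  qed
  have int: "F integrable_on {0..x}"
    by (rule integrable_continuous_real) (rule continuous_on_subset[OF F_cont], auto)
  have "integral {0..R} F + integral {R..x} F = integral {0..x} F"
    by (rule Henstock_Kurzweil_Integration.integral_combine[OF _ _ int]) (use False R2 in auto)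
  moreover have "integral {R..x} F = integral {R..x} (\<lambda>_. Z R)"
    by (rule integral_cong) (auto simp: F_def)
  moreover have "integral {R..x} (\<lambda>_. Z R) = (x - R) * Z R" using False by simp
  ultimately show ?thesis using hR False unfolding h_def by simp
qed

lemma N_eq: assumes "0 \<le> x" shows "x * F x - h x = N x"
proof (cases "x \<le> R")
  case True then show ?thesis using h_explicit[OF assms] by (simp add: F_def N_def N0_def)
next
  case False then show ?thesis using h_explicit[OF assms] by (simp add: F_def N_def N0_def algebra_simps)
qed

lemma I_deriv: "0 \<le> x \<Longrightarrow> (I has_real_derivative N x) (at x within {0..})"
  using I_deriv0 N_eq by simp

lemma I_cont: "continuous_on {0..} I"
  using I_deriv cont_from_deriv by blast

lemma I0: "I 0 = 0" by (simp add: I_def)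

end


lemma exp_le_lin: fixes u :: real assumes "0 \<le> u" "u \<le> 1" shows "exp u \<le> 1 + 3 * u"
proof -
  have "1 - u \<le> exp (-u)" using exp_ge_add_one_self[of "-u::real"] by simp
  then have "exp u * (1 - u) \<le> exp u * exp (-u)" by (intro mult_left_mono) auto
  then have "exp u - u * exp u \<le> 1" by (simp add: algebra_simps exp_minus_inverse)
  moreover have "exp u \<le> exp 1" using assms by simp
  moreover have "exp (1::real) < 3" using e_less_272 by simp
  moreover have "u * exp u \<le> u * 3"
  proof -
    have "exp u \<le> 3" using \<open>exp u \<le> exp 1\<close> \<open>exp (1::real) < 3\<close> by linarith
    then show ?thesis using assms by (intro mult_left_mono) auto
  qed
  ultimately show ?thesis by linarith
qed

context L2 begin

lemma P_le: assumes "1 \<le> t" "t \<le> 2" shows "t powr (y-2) \<le> 1 + 3*(y-2)"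
proof -
  have "0 \<le> ln t" "ln t \<le> 1" using assms ln_le_minus_one[of t] by auto
  then have u: "0 \<le> (y-2) * ln t" "(y-2) * ln t \<le> (y-2)" "(y-2) \<le> 1" using y2 y3
    by (auto intro: mult_nonneg_nonneg mult_left_le)
  have "t powr (y-2) = exp ((y-2) * ln t)" using assms by (simp add: powr_def)
  also have "\<dots> \<le> 1 + 3 * ((y-2) * ln t)" using u by (intro exp_le_lin) auto
  also have "\<dots> \<le> 1 + 3*(y-2)" using u by simp
  finally show ?thesis .
qed

lemma N0_formula: assumes "0 \<le> t"
  shows "N0 t = y*(y-2)*t*t powr (y-2)*xi t + t^2*(y*t powr (y-2) - 2)*xi' t"
  unfolding N0_def Z_def zeta_def powr_split[OF assms] by (simp add: algebra_simps power2_eq_square)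

lemma N0_zero: "0 \<le> t \<Longrightarrow> t \<le> 1 \<Longrightarrow> N0 t = 0"
  using N0_formula xi0 xi'_zero by simp

lemma yP2: assumes "1 \<le> t" shows "y - 2 \<le> y * t powr (y-2) - 2"
proof -
  have "y * 1 \<le> y * t powr (y-2)" using P_ge1[OF assms] y2 by (intro mult_left_mono) auto
  then show ?thesis by simp
qed

lemma yP2': assumes "1 \<le> t" shows "0 \<le> y * t powr (y-2) - 2"
  using yP2[OF assms] y2 by linarith

lemma N0_nonneg: assumes "0 \<le> t" shows "0 \<le> N0 t"
proof (cases "t \<le> 1")
  case True then show ?thesis using N0_zero assms by simp
next
  case False
  have "0 \<le> y*(y-2)*t*t powr (y-2)*xi t" using y2 False xi_nonneg[of t] by simp
  moreover have "0 \<le> t^2*(y*t powr (y-2) - 2)*xi' t" using yP2'[of t] y2 False xi'_nonneg[of t] by (intro mult_nonneg_nonneg) auto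
  ultimately show ?thesis using N0_formula[OF assms] by simp
qed

lemma N0_low1: assumes "1 \<le> t" "t \<le> 3/2" shows "3*(y-2)*(t-1)^2 \<le> N0 t"
proof -
  have "0 \<le> y*(y-2)*t*t powr (y-2)*xi t" using y2 assms xi_nonneg[of t] by simp
  moreover have "3*(y-2)*(t-1)^2 \<le> t^2*(y*t powr (y-2) - 2)*xi' t"
  proof -
    have "1 \<le> t^2" using assms by (simp add: one_le_power)
    then have "(y-2) * 1 \<le> (y*t powr (y-2) - 2) * t^2" using yP2[of t] yP2'[of t] assms y2
      by (intro mult_mono) auto
    then have "(y-2) * (3*(t-1)^2) \<le> (y*t powr (y-2) - 2) * t^2 * (3*(t-1)^2)"
      by (intro mult_right_mono) auto
    then show ?thesis using xi'_cube[OF assms] by (simp add: algebra_simps)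
  qed
  ultimately show ?thesis using N0_formula[of t] assms by simp
qed

lemma yp_le: assumes "1 \<le> t" "t \<le> 2" shows "y * t powr (y-2) - 2 \<le> 10*(y-2)"
proof -
  define e where "e = y - 2"
  have e: "0 \<le> e" "e \<le> 1" using y2 y3 by (auto simp: e_def)
  have "y * t powr (y-2) \<le> y*(1+3*e)" using P_le[OF assms] y2 by (intro mult_left_mono) (auto simp: e_def)
  also have "\<dots> = 2 + e + 3*(y*e)" by (simp add: e_def algebra_simps)
  also have "\<dots> \<le> 2 + e + 3*(3*e)"
  proof -
    have "y*e \<le> 3*e" using y3 e(1) by (rule mult_right_mono)
    then show ?thesis by linarith
  qed
  finally show ?thesis by (simp add: e_def)
qed

lemma N0_up1: assumes "1 \<le> t" "t \<le> 3/2" shows "N0 t \<le> 80*(y-2)*(t-1)^2"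
proof -
  define a where "a = t - 1"
  define e where "e = y - 2"
  define p where "p = t powr (y-2)"
  have a: "0 \<le> a" "a \<le> 1/2" using assms by (auto simp: a_def)
  have e: "0 \<le> e" "e \<le> 1" using y2 y3 by (auto simp: e_def)
  have p: "1 \<le> p" "p \<le> 4" using P_ge1[of t] P_le[of t] assms e by (auto simp: p_def e_def)
  have "a*a*a \<le> a*a*(1/2)" using a by (intro mult_left_mono) auto
  then have a3: "a^3 \<le> a^2 * (1/2)" by (simp add: power3_eq_cube power2_eq_square)
  have T1: "y*e*t*p*a^3 \<le> 3*e*(3/2)*4*(a^2*(1/2))" using a e p y2 y3 assms a3
    by (intro mult_mono) (auto intro!: mult_nonneg_nonneg)
  have yp: "y*p - 2 \<le> 10*e" using yp_le[of t] assms by (simp add: p_def e_def)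
  have yp0: "y*p - 2 \<ge> 0" using yP2'[of t] assms unfolding p_def by simp
  have t2: "t^2 \<le> (3/2)^2" using assms by (intro power_mono) auto
  have "t^2*(y*p - 2) \<le> (9/4)*(10*e)" using yp yp0 t2
    by (intro mult_mono) (auto simp: power2_eq_square)
  then have T2: "t^2*(y*p - 2)*(3*a^2) \<le> (9/4)*(10*e)*(3*a^2)"
    by (rule mult_right_mono) auto
  have "N0 t = y*e*t*p*a^3 + t^2*(y*p - 2)*(3*a^2)"
    using N0_formula[of t] assms xi_cube xi'_cube by (simp add: a_def e_def p_def)
  also have "\<dots> \<le> 3*e*(3/2)*4*(a^2*(1/2)) + (9/4)*(10*e)*(3*a^2)" using T1 T2 by linarith
  also have "\<dots> \<le> 80*e*a^2" using e a by (simp add: algebra_simps)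
  finally show ?thesis by (simp add: a_def e_def)
qed

lemma N0_up2: assumes "3/2 \<le> t" "t \<le> 2" shows "N0 t \<le> (y-2)*(24 + 40*M)"
proof -
  define e where "e = y - 2"
  define p where "p = t powr (y-2)"
  have e: "0 \<le> e" "e \<le> 1" using y2 y3 by (auto simp: e_def)
  have p: "1 \<le> p" "p \<le> 4" using P_ge1[of t] P_le[of t] assms e by (auto simp: p_def e_def)
  have x: "0 \<le> xi t" "xi t \<le> 1" "0 \<le> xi' t" "xi' t \<le> M" using xi_nonneg xi_le1 xi'_nonneg Mb assms by auto
  have T1: "y*e*t*p*xi t \<le> 3*e*2*4*1" using x e p y2 y3 assms
    by (intro mult_mono) (auto intro!: mult_nonneg_nonneg)
  have yp: "y*p - 2 \<le> 10*e" using yp_le[of t] assms by (simp add: p_def e_def)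
  have yp0: "y*p - 2 \<ge> 0" using yP2'[of t] assms unfolding p_def by simp
  have t2: "t^2 \<le> 2^2" using assms by (intro power_mono) auto
  have "t^2*(y*p - 2) \<le> 4*(10*e)" using yp yp0 t2
    by (intro mult_mono) (auto simp: power2_eq_square)
  then have T2: "t^2*(y*p - 2)*xi' t \<le> 4*(10*e)*M"
    using mult_mono[OF _ x(4)] x(3) e by simp
  have "N0 t = y*e*t*p*xi t + t^2*(y*p - 2)*xi' t"
    using N0_formula[of t] assms by (simp add: e_def p_def)
  also have "\<dots> \<le> 3*e*2*4*1 + 4*(10*e)*M" using T1 T2 by linarith
  finally show ?thesis by (simp add: e_def algebra_simps)
qed

lemma N0_low3: assumes "3/2 \<le> t" shows "y*(y-2)*t*t powr (y-2) / 8 \<le> N0 t"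
proof -
  have "y*(y-2)*t*t powr (y-2) * (1/8) \<le> y*(y-2)*t*t powr (y-2)*xi t"
    using xi_ge[OF assms] y2 assms by (intro mult_left_mono) auto
  moreover have "0 \<le> t^2*(y*t powr (y-2) - 2)*xi' t" using yP2'[of t] y2 assms xi'_nonneg[of t] by (intro mult_nonneg_nonneg) auto
  ultimately show ?thesis using N0_formula[of t] assms by simp
qed

lemma N0_eq3: "2 \<le> t \<Longrightarrow> N0 t = y*(y-2)*t*t powr (y-2)"
  using N0_formula[of t] high xi'_high by simp

lemma Z_eq3: "2 \<le> t \<Longrightarrow> Z t = y*(y-1)*t powr (y-2)"
  unfolding Z_def using high xi'_high by simp

end


context L2 begin

definition K :: real where "K = 24 + 40*M"

lemma K_ge: "24 \<le> K" using M0 by (simp add: K_def)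

lemma I_at: "0 < x \<Longrightarrow> (I has_real_derivative N x) (at x)"
  using I_deriv within_Ici_to_at by simp

lemma N_nonneg: "0 \<le> x \<Longrightarrow> 0 \<le> N x"
  unfolding N_def using N0_nonneg R2 by simp

lemma N_small: "0 \<le> x \<Longrightarrow> x \<le> 1 \<Longrightarrow> N x = 0"
  unfolding N_def using N0_zero R2 by simp

lemma I_cont_on: "0 \<le> a \<Longrightarrow> continuous_on {a..b} I"
  by (rule continuous_on_subset[OF I_cont]) auto

lemma I_mono: assumes "0 \<le> a" "a \<le> b" shows "I a \<le> I b"
proof -
  have "(\<lambda>_. 0::real) b - (\<lambda>_. 0::real) a \<le> I b - I a"
    by (rule deriv_compare[OF assms(2) continuous_on_const I_cont_on[OF assms(1)], where f'="\<lambda>_. 0" and g'=N])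
       (use assms in \<open>auto intro!: I_at N_nonneg\<close>)
  then show ?thesis by simp
qed

lemma I_nonneg: "0 \<le> x \<Longrightarrow> 0 \<le> I x"
  using I_mono[of 0 x] I0 by simp

lemma I_zero: assumes "0 \<le> x" "x \<le> 1" shows "I x = 0"
proof -
  have "I x - I 0 \<le> (\<lambda>_. 0::real) x - (\<lambda>_. 0::real) 0"
  proof (rule deriv_compare[OF assms(1) I_cont_on[OF order_refl] continuous_on_const, where f'=N and g'="\<lambda>_. 0"])
    fix t assume t: "0 < t" "t < x"
    show "(I has_real_derivative N t) (at t)" using t by (intro I_at)
    show "((\<lambda>_. 0::real) has_real_derivative 0) (at t)" by simp
    show "N t \<le> 0" using N_small[of t] t assms by simp
  qed
  then show ?thesis using I0 I_nonneg[OF assms(1)] by simp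
qed

lemma N_eq_N0: "0 \<le> x \<Longrightarrow> x \<le> R \<Longrightarrow> N x = N0 x"
  unfolding N_def by simp

lemma I_low1: assumes "1 \<le> x" "x \<le> 3/2" shows "(y-2)*(x-1)^3 \<le> I x"
proof -
  have "(\<lambda>t. (y-2)*(t-1)^3) x - (\<lambda>t. (y-2)*(t-1)^3) 1 \<le> I x - I 1"
  proof (rule deriv_compare[OF assms(1) _ I_cont_on, where f'="\<lambda>t. (y-2)*(3*(t-1)^2)" and g'=N])
    show "continuous_on {1..x} (\<lambda>t. (y - 2) * (t - 1) ^ 3)" by (intro continuous_intros)
  next
    fix t assume "1 < t" "t < x"
    then show "((\<lambda>t. (y-2)*(t-1)^3) has_real_derivative (y-2)*(3*(t-1)^2)) (at t)"
      by (auto intro!: derivative_eq_intros)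
    show "(I has_real_derivative N t) (at t)" using \<open>1 < t\<close> by (intro I_at) auto
    show "(y-2)*(3*(t-1)^2) \<le> N t" using N0_low1[of t] \<open>1 < t\<close> \<open>t < x\<close> assms R2 N_eq_N0[of t]
      by (simp add: algebra_simps)
  qed simp
  then show ?thesis using I_zero[of 1] by simp
qed

lemma I_up1: assumes "1 \<le> x" "x \<le> 3/2" shows "I x \<le> 27*(y-2)*(x-1)^3"
proof -
  have "I x - I 1 \<le> (\<lambda>t. 27*(y-2)*(t-1)^3) x - (\<lambda>t. 27*(y-2)*(t-1)^3) 1"
  proof (rule deriv_compare[OF assms(1) I_cont_on, where g'="\<lambda>t. 27*(y-2)*(3*(t-1)^2)" and f'=N])
    show "continuous_on {1..x} (\<lambda>t. 27*(y - 2) * (t - 1) ^ 3)" by (intro continuous_intros)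
  next
    fix t assume "1 < t" "t < x"
    then show "((\<lambda>t. 27*(y-2)*(t-1)^3) has_real_derivative 27*(y-2)*(3*(t-1)^2)) (at t)"
      by (auto intro!: derivative_eq_intros)
    show "(I has_real_derivative N t) (at t)" using \<open>1 < t\<close> by (intro I_at) auto
    have h0: "0 \<le> (y-2)*(t-1)^2" using y2 by simp
    have "N0 t \<le> 80*(y-2)*(t-1)^2" using N0_up1[of t] \<open>1 < t\<close> \<open>t < x\<close> assms by simp
    moreover have "80*(y-2)*(t-1)^2 = 80*((y-2)*(t-1)^2)" by (simp only: mult.assoc)
    moreover have "N t = N0 t" using N_eq_N0[of t] \<open>1 < t\<close> \<open>t < x\<close> assms R2 by simp
    ultimately have "N t \<le> 80*((y-2)*(t-1)^2)" by linarith
    moreover have "27*(y-2)*(3*(t-1)^2) = 81*((y-2)*(t-1)^2)" by simp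
    ultimately show "N t \<le> 27*(y-2)*(3*(t-1)^2)" using h0 by linarith
  qed simp
  then show ?thesis using I_zero[of 1] by simp
qed

lemma I_low32: assumes "3/2 \<le> x" shows "(y-2)/8 \<le> I x"
  using I_low1[of "3/2"] I_mono[of "3/2" x] assms by (simp add: power3_eq_cube)

lemma I_low3: assumes "2 \<le> x" "x \<le> R" shows "(9/512)*y*(y-2)*x^2*x powr (y-2) \<le> I x"
proof -
  define a where "a = 3*x/4"
  define c where "c = y*(y-2)*a*a powr (y-2)/8"
  have a: "3/2 \<le> a" "a \<le> x" using assms by (auto simp: a_def)
  have "(\<lambda>t. c*t) x - (\<lambda>t. c*t) a \<le> I x - I a"
  proof (rule deriv_compare[OF a(2) _ I_cont_on, where f'="\<lambda>t. c" and g'=N])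
    show "continuous_on {a..x} (\<lambda>t. c*t)" by (intro continuous_intros)
    show "0 \<le> a" using a by simp
  next
    fix t assume t: "a < t" "t < x"
    then show "((\<lambda>t. c*t) has_real_derivative c) (at t)"
      by (auto intro!: derivative_eq_intros)
    show "(I has_real_derivative N t) (at t)" using t a by (intro I_at) auto
    have "a powr (y-2) \<le> t powr (y-2)" using t a y2 by (intro powr_mono2) auto
    then have "a*a powr (y-2) \<le> t*t powr (y-2)" using t a by (intro mult_mono) auto
    then have "c \<le> y*(y-2)*t*t powr (y-2)/8" unfolding c_def using y2
      by (simp add: mult.assoc divide_right_mono mult_left_mono)
    also have "\<dots> \<le> N t" using N0_low3[of t] N_eq_N0[of t] t a assms by simp
    finally show "c \<le> N t" .
  qed
  then have "c*(x - a) \<le> I x" using I_nonneg[of a] a by (simp add: algebra_simps)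
  moreover have "(9/512)*y*(y-2)*x^2*x powr (y-2) \<le> c*(x-a)"
  proof -
    have "a powr (y-2) = (3/4) powr (y-2) * x powr (y-2)" unfolding a_def using assms
      by (simp add: powr_mult[symmetric])
    moreover have "(3/4::real) \<le> (3/4) powr (y-2)"
      using powr_mono'[of "y-2" 1 "3/4::real"] y3 by simp
    moreover have "(3/4) * x powr (y-2) \<le> (3/4) powr (y-2) * x powr (y-2)"
      using \<open>(3/4::real) \<le> (3/4) powr (y-2)\<close> by (rule mult_right_mono) simp
    ultimately have "(3/4) * x powr (y-2) \<le> a powr (y-2)" by simp
    then have "y*(y-2)*a*((3/4) * x powr (y-2))/8*(x/4) \<le> y*(y-2)*a*a powr (y-2)/8*(x/4)"
      using y2 a assms by (intro mult_right_mono divide_right_mono mult_left_mono) auto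
    moreover have "x - a = x/4" by (simp add: a_def)
    moreover have "(9/512)*y*(y-2)*x^2*x powr (y-2) = y*(y-2)*a*((3/4)*x powr (y-2))/8*(x/4)"
      by (simp add: a_def power2_eq_square)
    moreover have "c*(x-a) = y*(y-2)*a*a powr (y-2)/8*(x/4)" using \<open>x - a = x/4\<close> by (simp add: c_def)
    ultimately show ?thesis by linarith
  qed
  ultimately show ?thesis by linarith
qed

end


context L2 begin

lemma KB_core: assumes "0 \<le> x" "x \<le> R" shows "(N x)^2 \<le> 4*K^2*(y-2)*F x*I x"
proof -
  define e where "e = y - 2"
  have e: "0 \<le> e" "e \<le> 1" using y2 y3 by (auto simp: e_def)
  have Nx: "N x = N0 x" using N_eq_N0 assms by simp
  have Nn: "0 \<le> N x" using N_nonneg assms by simp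
  have Ix: "0 \<le> I x" using I_nonneg assms by simp
  have Fx: "2 \<le> F x" using F_ge2 assms by simp
  have K: "24 \<le> K" by (rule K_ge)
  have K2: "576 \<le> K^2" using power_mono[OF K, of 2] by simp
  have base: "4*K^2*e*2*I x \<le> 4*K^2*e*F x*I x"
    using Fx Ix e K2 by (intro mult_right_mono mult_left_mono) auto
  consider "x \<le> 1" | "1 \<le> x" "x \<le> 3/2" | "3/2 \<le> x" "x \<le> 2" | "2 \<le> x" by linarith
  then show ?thesis
  proof cases
    case 1
    then have "N x = 0" using N_small assms by simp
    moreover have "0 \<le> 4*K^2*e*F x*I x" using Fx Ix e by simp
    ultimately show ?thesis by (simp add: e_def)
  next
    case 2
    define b where "b = x - 1"
    have b: "0 \<le> b" "b \<le> 1/2" using 2 by (auto simp: b_def)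
    have N1: "N x \<le> 80*e*b^2" using N0_up1[OF 2] Nx by (simp add: e_def b_def)
    have I1: "e*b^3 \<le> I x" using I_low1[OF 2] by (simp add: e_def b_def)
    have "(N x)^2 \<le> (80*e*b^2)^2" using N1 Nn by (intro power_mono) auto
    also have "\<dots> = 6400*(e^2*b^3)*b" by (simp add: power2_eq_square power3_eq_cube)
    also have "\<dots> \<le> 6400*(e^2*b^3)*(1/2)" using b by (intro mult_left_mono) auto
    also have "\<dots> \<le> 8*K^2*(e^2*b^3)"
    proof -
      have q: "0 \<le> e^2*b^3" using b by simp
      have "3200 \<le> 8*K^2" using K2 by simp
      from mult_right_mono[OF this q] show ?thesis by simp
    qed
    also have "\<dots> = 4*K^2*e*2*(e*b^3)" by (simp add: power2_eq_square)
    also have "\<dots> \<le> 4*K^2*e*2*I x" using I1 e by (intro mult_left_mono) auto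
    also have "\<dots> \<le> 4*K^2*e*F x*I x" by (rule base)
    finally show ?thesis by (simp add: e_def)
  next
    case 3
    have N1: "N x \<le> e*K" using N0_up2[OF 3] Nx by (simp add: e_def K_def)
    have I1: "e/8 \<le> I x" using I_low32 3 by (simp add: e_def)
    have "(N x)^2 \<le> (e*K)^2" using N1 Nn by (intro power_mono) auto
    also have "\<dots> = 4*K^2*e*2*(e/8)" by (simp add: power2_eq_square)
    also have "\<dots> \<le> 4*K^2*e*2*I x" using I1 e by (intro mult_left_mono) auto
    also have "\<dots> \<le> 4*K^2*e*F x*I x" by (rule base)
    finally show ?thesis by (simp add: e_def)
  next
    case 4
    define p where "p = x powr (y-2)"
    have p: "0 \<le> p" by (simp add: p_def)
    have N1: "N x = y*e*x*p" using N0_eq3[OF 4] Nx by (simp add: e_def p_def)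
    have F1: "F x = y*(y-1)*p" using Z_eq3[OF 4] assms by (simp add: F_def p_def)
    have I1: "(9/512)*y*e*x^2*p \<le> I x" using I_low3[OF 4 assms(2)] by (simp add: e_def p_def)
    define Q where "Q = y^2*e^2*x^2*p^2"
    have Q: "0 \<le> Q" by (simp add: Q_def)
    have "(N x)^2 = Q" by (simp add: N1 Q_def power_mult_distrib)
    also have "\<dots> \<le> ((36/512)*K^2*(y-1))*Q"
    proof -
      have "1 \<le> (36/512)*K^2*(y-1)"
      proof -
        have "(36/512)*576*1 \<le> (36/512)*K^2*(y-1)" using K2 y2 by (intro mult_mono) auto
        then show ?thesis by (simp add: mult.commute)
      qed
      then have "1*Q \<le> ((36/512)*K^2*(y-1))*Q" by (rule mult_right_mono[OF _ Q])
      then show ?thesis by (simp only: mult_1)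
    qed
    also have "\<dots> = 4*K^2*e*(y*(y-1)*p)*((9/512)*y*e*x^2*p)"
      by (simp add: Q_def power2_eq_square)
    also have "\<dots> \<le> 4*K^2*e*(y*(y-1)*p)*I x"
      using I1 e y2 p by (intro mult_left_mono) auto
    finally show ?thesis by (simp add: F1 e_def)
  qed
qed

lemma KB: assumes "0 \<le> x" shows "(N x)^2 \<le> 4*K^2*(y-2)*F x*I x"
proof (cases "x \<le> R")
  case True then show ?thesis using KB_core assms by simp
next
  case False
  have "N x = N R" "F x = F R" using False by (auto simp: N_def F_def)
  moreover have "I R \<le> I x" using I_mono[of R x] False R2 by simp
  moreover have "0 \<le> 4*K^2*(y-2)*F R" using F_ge2[of R] R2 y2 by simp
  ultimately show ?thesis using KB_core[of R] R2
    by (smt (verit) mult_left_mono)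
qed

end


context L2 begin

definition Df :: "real \<Rightarrow> real" where "Df x = (if 0 < I x then N x / (2 * sqrt (I x)) else 0)"

lemma N0_y2: assumes "y = 2" "0 \<le> t" shows "N0 t = 0"
proof (cases "t = 0")
  case True then show ?thesis using N0_zero by simp
next
  case False then show ?thesis using N0_formula[OF assms(2)] assms by simp
qed

lemma I_y2: assumes "y = 2" "0 \<le> x" shows "I x = 0"
proof -
  have "I x - I 0 \<le> (\<lambda>_. 0::real) x - (\<lambda>_. 0::real) 0"
  proof (rule deriv_compare[OF assms(2) I_cont_on[OF order_refl] continuous_on_const, where f'=N and g'="\<lambda>_. 0"])
    fix t assume t: "0 < t" "t < x"
    show "(I has_real_derivative N t) (at t)" using t by (intro I_at)
    show "((\<lambda>_. 0::real) has_real_derivative 0) (at t)" by simp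
    show "N t \<le> 0" using N0_y2[OF assms(1)] t R2 by (simp add: N_def)
  qed
  then show ?thesis using I0 I_nonneg[OF assms(2)] by simp
qed

lemma I_pos: assumes "2 < y" "1 < x" shows "0 < I x"
proof (cases "x \<le> 3/2")
  case True
  have "0 < (y-2)*(x-1)^3" using assms by simp
  moreover have "(y-2)*(x-1)^3 \<le> I x" using I_low1[of x] True assms by simp
  ultimately show ?thesis by linarith
next
  case False
  then show ?thesis using I_low32[of x] assms by simp
qed

lemma D_bound: assumes "0 \<le> x" shows "0 \<le> Df x \<and> Df x \<le> K * sqrt(y-2) * sqrt(F x)"
proof (cases "0 < I x")
  case True
  have K: "0 \<le> K" using K_ge by simp
  have e: "0 \<le> y - 2" using y2 by simp
  have N: "0 \<le> N x" using N_nonneg assms by simp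
  have "N x = sqrt ((N x)^2)" using N by simp
  also have "\<dots> \<le> sqrt (4*K^2*(y-2)*F x*I x)" using real_sqrt_le_mono[OF KB[OF assms]] by simp
  also have "\<dots> = (2*K) * sqrt(y-2) * sqrt(F x) * sqrt(I x)"
    using K by (simp add: real_sqrt_mult real_sqrt_abs)
  finally have "N x \<le> (K * sqrt(y-2) * sqrt(F x))*(2 * sqrt(I x))" by (simp add: algebra_simps)
  then have "N x / (2 * sqrt (I x)) \<le> K * sqrt(y-2) * sqrt(F x)" using True by (simp add: divide_le_eq)
  moreover have "0 \<le> N x / (2 * sqrt (I x))" using N True by simp
  ultimately show ?thesis using True by (simp add: Df_def)
next
  case False
  have "0 \<le> K * sqrt(y-2) * sqrt(F x)" using K_ge y2 F_ge2[OF assms] by simp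
  then show ?thesis using False by (simp add: Df_def)
qed

lemma D_small_bound: assumes "2 < y" "1 < s" "s \<le> 3/2" shows "Df s \<le> 40 * sqrt(s-1)"
proof -
  define e where "e = y - 2"
  define b where "b = s - 1"
  have e: "0 < e" "e \<le> 1" using assms y3 by (auto simp: e_def)
  have b: "0 < b" using assms by (simp add: b_def)
  have Ip: "0 < I s" using I_pos assms by simp
  have Nn: "0 \<le> N s" using N_nonneg assms by simp
  have N1: "N s \<le> 80*e*b^2" using N0_up1[of s] N_eq_N0[of s] assms R2 by (simp add: e_def b_def)
  have I1: "e*b^3 \<le> I s" using I_low1[of s] assms by (simp add: e_def b_def)
  have "(N s)^2 \<le> (80*e*b^2)^2" using N1 Nn by (intro power_mono) auto
  also have "\<dots> = 6400*(e*b)*(e*b^3)" by (simp add: power2_eq_square power3_eq_cube)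
  also have "\<dots> \<le> 6400*(e*b)*I s" using I1 e b by (intro mult_left_mono) auto
  also have "\<dots> \<le> 6400*(1*b)*I s" using e b Ip by (intro mult_right_mono mult_left_mono) auto
  finally have NN: "(N s)^2 \<le> (1600*b)*(4*I s)" by simp
  have "(Df s)^2 = (N s)^2 / (4*I s)" using Ip by (simp add: Df_def power_divide power2_eq_square)
  also have "\<dots> \<le> 1600*b" using NN Ip by (simp add: divide_le_eq)
  finally have "(Df s)^2 \<le> 1600*b" .
  moreover have "0 \<le> Df s" using D_bound[of s] assms by simp
  ultimately have "Df s \<le> sqrt (1600*b)" using real_le_rsqrt by blast
  also have "sqrt (1600*b) = 40 * sqrt b" by (simp add: real_sqrt_mult)
  finally show ?thesis by (simp add: b_def)
qed

lemma N_cont: "continuous_on {0..} N"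
proof -
  have zc: "continuous_on {0..} (\<lambda>t. zeta xi t y)"
    using zeta_deriv cont_from_deriv by blast
  have "continuous_on {0..} N0" unfolding N0_def[abs_def]
    by (intro continuous_intros Z_cont zc)
  then show ?thesis unfolding N_def[abs_def] using R2
    by (intro continuous_on_compose2[of "{0..}" N0 "{0..}" "\<lambda>s. min s R"]) (auto intro!: continuous_intros)
qed

lemma zero_deriv_local:
  assumes "0 \<le> x" "0 < d" "\<And>s. 0 \<le> s \<Longrightarrow> dist s x < d \<Longrightarrow> I s = 0"
  shows "((\<lambda>s. sqrt (I s)) has_real_derivative 0) (at x within {0..})"
proof -
  have "((\<lambda>s. 0::real) has_real_derivative 0) (at x within {0..})" by simp
  then show ?thesis
    by (rule has_field_derivative_transform_within[where d=d]) (use assms in auto)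
qed

lemma deriv_at1: assumes "2 < y"
  shows "((\<lambda>s. sqrt (I s)) has_real_derivative 0) (at 1 within {0..})"
proof -
  have ev0: "\<forall>s\<in>{0..}. 0 < dist s 1 \<and> dist s 1 < 1/2 \<longrightarrow> norm ((sqrt (I s) - sqrt (I 1)) / (s - 1)) \<le> 6 * sqrt \<bar>s - 1\<bar>"
  proof (intro ballI impI)
    fix s :: real assume s: "s \<in> {0..}" "0 < dist s 1 \<and> dist s 1 < 1/2"
    have I1: "I 1 = 0" using I_zero by simp
    show "norm ((sqrt (I s) - sqrt (I 1)) / (s - 1)) \<le> 6 * sqrt \<bar>s - 1\<bar>"
    proof (cases "s \<le> 1")
      case True then show ?thesis using I_zero[of s] s I1 by simp
    next
      case False
      define b where "b = s - 1"
      have b: "0 < b" "b \<le> 1/2" using False s by (auto simp: b_def dist_real_def)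
      have "I s \<le> 27*(y-2)*b^3" using I_up1[of s] b by (simp add: b_def)
      also have "\<dots> \<le> 27*1*b^3" using y3 b by (intro mult_right_mono mult_left_mono) auto
      finally have "I s \<le> 27*b^3" by simp
      then have "sqrt (I s) \<le> sqrt (27*b^3)" by (rule real_sqrt_le_mono)
      also have "sqrt (27*b^3) = sqrt 27 * b * sqrt b" using b
        by (simp add: real_sqrt_mult power3_eq_cube)
      also have "\<dots> \<le> 6 * b * sqrt b"
      proof -
        have "sqrt 27 \<le> sqrt (6^2)" by (rule real_sqrt_le_mono) simp
        then have "sqrt 27 \<le> 6" by simp
        then show ?thesis using b by (intro mult_right_mono) auto
      qed
      finally have "sqrt (I s) / b \<le> 6 * sqrt b" using b by (simp add: divide_le_eq algebra_simps)
      then show ?thesis using I1 b I_nonneg[of s] by (simp add: b_def)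
    qed
  qed
  have ev: "eventually (\<lambda>s. norm ((sqrt (I s) - sqrt (I 1)) / (s - 1)) \<le> 6 * sqrt \<bar>s - 1\<bar>) (at 1 within {0..})"
    unfolding eventually_at using ev0 by (intro exI[of _ "1/2::real"]) auto
  have "((\<lambda>s. 6 * sqrt \<bar>s - 1\<bar>) \<longlongrightarrow> 6 * sqrt \<bar>1 - 1\<bar>) (at 1 within {0..})"
    by (intro tendsto_intros)
  then have "((\<lambda>s. 6 * sqrt \<bar>s - 1\<bar>) \<longlongrightarrow> 0) (at 1 within {0..})" by simp
  from Lim_null_comparison[OF ev this]
  show ?thesis by (simp add: has_field_derivative_iff)
qed

lemma deriv_sqrtI: assumes "0 \<le> x" shows "((\<lambda>s. sqrt (I s)) has_real_derivative Df x) (at x within {0..})"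
proof (cases "0 < I x")
  case True
  then have x: "0 < x" using I_zero[of x] assms by (cases "x \<le> 1") auto
  have "((\<lambda>s. sqrt (I s)) has_real_derivative inverse (sqrt (I x)) / 2 * N x) (at x)"
    by (rule DERIV_chain2[OF DERIV_real_sqrt[OF True] I_at[OF x]])
  moreover have "inverse (sqrt (I x)) / 2 * N x = Df x" using True by (simp add: Df_def field_simps)
  ultimately show ?thesis by (simp add: has_field_derivative_at_within)
next
  case False
  then have Ix: "I x = 0" using I_nonneg[OF assms] by simp
  then have D0: "Df x = 0" by (simp add: Df_def)
  show ?thesis
  proof (cases "y = 2")
    case True
    show ?thesis unfolding D0 by (rule zero_deriv_local[of x 1]) (use assms True I_y2 in auto)
  next
    case False
    then have y: "2 < y" using y2 by simp
    have x1: "x \<le> 1" using I_pos[OF y, of x] Ix by (cases "x \<le> 1") auto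
    show ?thesis
    proof (cases "x = 1")
      case True then show ?thesis using deriv_at1[OF y] D0 by simp
    next
      case False
      then have "x < 1" using x1 by simp
      then show ?thesis unfolding D0
        by (intro zero_deriv_local[of x "1 - x"]) (auto simp: assms dist_real_def intro!: I_zero)
    qed
  qed
qed

lemma D_cont: "continuous_on {0..} Df"
proof (cases "y = 2")
  case True
  have "continuous_on {0..} (\<lambda>_. 0::real)" by simp
  then show ?thesis
    by (rule continuous_on_cong[THEN iffD1, OF refl, rotated]) (auto simp: Df_def I_y2[OF True])
next
  case False
  then have y: "2 < y" using y2 by simp
  have c1: "continuous_on {0..1} Df"
    by (rule continuous_on_cong[THEN iffD2, OF refl _ continuous_on_const[of _ 0]]) (auto simp: Df_def I_zero)
  have c2: "continuous_on {1..} Df"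
    unfolding continuous_on_eq_continuous_within
  proof
    fix x :: real assume x: "x \<in> {1..}"
    show "continuous (at x within {1..}) Df"
    proof (cases "x = 1")
      case True
      have D1: "Df 1 = 0" by (simp add: Df_def I_zero)
      have ev0: "\<forall>s\<in>{1..}. 0 < dist s 1 \<and> dist s 1 < 1/2 \<longrightarrow> norm (Df s) \<le> 40 * sqrt \<bar>s - 1\<bar>"
      proof (intro ballI impI)
        fix s :: real assume s: "s \<in> {1..}" "0 < dist s 1 \<and> dist s 1 < 1/2"
        then have s1: "1 < s" "s \<le> 3/2" by (auto simp: dist_real_def)
        then show "norm (Df s) \<le> 40 * sqrt \<bar>s - 1\<bar>"
          using D_small_bound[OF y s1] D_bound[of s] by simp
      qed
      have ev: "eventually (\<lambda>s. norm (Df s) \<le> 40 * sqrt \<bar>s - 1\<bar>) (at 1 within {1..})"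
        unfolding eventually_at using ev0 by (intro exI[of _ "1/2::real"]) auto
      have "((\<lambda>s. 40 * sqrt \<bar>s - 1\<bar>) \<longlongrightarrow> 40 * sqrt \<bar>1 - 1\<bar>) (at 1 within {1..})"
        by (intro tendsto_intros)
      then have "((\<lambda>s. 40 * sqrt \<bar>s - 1\<bar>) \<longlongrightarrow> 0) (at 1 within {1..})" by simp
      from Lim_null_comparison[OF ev this] show ?thesis using True D1 by (simp add: continuous_within)
    next
      case False
      then have x1: "1 < x" using x by simp
      have "isCont (\<lambda>s. N s / (2 * sqrt (I s))) x"
      proof (intro continuous_intros)
        show "isCont N x" using continuous_on_interior[OF N_cont, of x] x1 by simp
        show "isCont I x" using DERIV_isCont[OF I_at[of x]] x1 by simp
        show "2 * sqrt (I x) \<noteq> 0" using I_pos[OF y x1] by simp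
      qed
      moreover have "eventually (\<lambda>s. Df s = N s / (2 * sqrt (I s))) (nhds x)"
      proof -
        have "eventually (\<lambda>s. s \<in> {1<..}) (nhds x)" using x1 by (intro eventually_nhds_in_open) auto
        then show ?thesis by eventually_elim (use I_pos[OF y] in \<open>auto simp: Df_def\<close>)
      qed
      ultimately have "isCont Df x" using isCont_cong[of Df "\<lambda>s. N s / (2 * sqrt (I s))" x] by simp
      then show ?thesis by (rule continuous_at_imp_continuous_within)
    qed
  qed
  have "continuous_on ({0..1} \<union> {1..}) Df" by (intro continuous_on_closed_Un c1 c2) auto
  moreover have "{0..1} \<union> {1..} = {0::real..}" by auto
  ultimately show ?thesis by simp
qed

lemma r0: "r 0 = 0" by (simp add: r_def)

lemma sqrtI_bound: assumes "0 \<le> x" shows "sqrt (I x) \<le> K * sqrt (y-2) * r x"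
proof -
  have c1: "continuous_on {0..x} (\<lambda>s. sqrt (I s))"
    by (rule continuous_on_subset[OF cont_from_deriv[OF deriv_sqrtI]]) auto
  have c2: "continuous_on {0..x} (\<lambda>s. K * sqrt (y-2) * r s)"
    by (rule continuous_on_subset[OF cont_from_deriv[of _ "\<lambda>s. K * sqrt (y-2) * sqrt (F s)"]])
       (auto intro!: DERIV_cmult r_deriv)
  have "(\<lambda>s. sqrt (I s)) x - (\<lambda>s. sqrt (I s)) 0 \<le> (\<lambda>s. K * sqrt (y-2) * r s) x - (\<lambda>s. K * sqrt (y-2) * r s) 0"
  proof (rule deriv_compare[OF assms c1 c2, where f'=Df and g'="\<lambda>s. K * sqrt (y-2) * sqrt (F s)"])
    fix t :: real assume t: "0 < t" "t < x"
    show "((\<lambda>s. sqrt (I s)) has_real_derivative Df t) (at t)"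
      using deriv_sqrtI[of t] t by (intro within_Ici_to_at) auto
    show "((\<lambda>s. K * sqrt (y-2) * r s) has_real_derivative K * sqrt (y-2) * sqrt (F t)) (at t)"
      using r_deriv[of t] t by (intro within_Ici_to_at DERIV_cmult) auto
    show "Df t \<le> K * sqrt (y-2) * sqrt (F t)" using D_bound[of t] t by simp
  qed
  then show ?thesis using I0 r0 by simp
qed

end


theorem mainTheorem17:
  fixes xi :: "real \<Rightarrow> real"
  assumes xi_mono: "mono_on {0..} xi"
    and xi_C2: "\<exists>xi' xi''. (\<forall>x\<ge>0. (xi has_real_derivative xi' x) (at x within {0..})
                 \<and> (xi' has_real_derivative xi'' x) (at x within {0..}))
               \<and> continuous_on {0..} xi''"
    and xi_low: "\<And>x. 0 \<le> x \<Longrightarrow> x \<le> 3/2 \<Longrightarrow> xi x = max ((x - 1) ^ 3) 0"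
    and xi_high: "\<And>x. 2 \<le> x \<Longrightarrow> xi x = 1"
  shows "\<exists>K0>0. \<forall>R>2. \<forall>y\<in>{2..3}. \<exists>D.
           continuous_on {0..} D
         \<and> (\<forall>x\<ge>0. ((\<lambda>s. sqrt (iotaR xi R s y)) has_real_derivative D x) (at x within {0..}))
         \<and> (\<forall>x\<ge>0. 0 \<le> D x \<and> D x \<le> K0 * sqrt (y - 2) * gR xi R x y
                  \<and> 0 \<le> sqrt (iotaR xi R x y)
                  \<and> sqrt (iotaR xi R x y) \<le> K0 * sqrt (y - 2) * rhoR xi R x y)"
proof -
  obtain xi' xi'' where d: "\<forall>x\<ge>0. (xi has_real_derivative xi' x) (at x within {0..})
                 \<and> (xi' has_real_derivative xi'' x) (at x within {0..})"
    using xi_C2 by blast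
  have cxi': "continuous_on {0..} xi'"
    unfolding continuous_on_eq_continuous_within using d DERIV_continuous by blast
  interpret L xi xi'
    by unfold_locales (use xi_mono d cxi' xi_low xi_high in auto)
  obtain M where M: "0 \<le> M" "\<forall>x\<in>{0..2}. xi' x \<le> M" using xi'_bound by blast
  have "\<forall>R>2. \<forall>y\<in>{2..3}. \<exists>D.
           continuous_on {0..} D
         \<and> (\<forall>x\<ge>0. ((\<lambda>s. sqrt (iotaR xi R s y)) has_real_derivative D x) (at x within {0..}))
         \<and> (\<forall>x\<ge>0. 0 \<le> D x \<and> D x \<le> (24 + 40*M) * sqrt (y - 2) * gR xi R x y
                  \<and> 0 \<le> sqrt (iotaR xi R x y)
                  \<and> sqrt (iotaR xi R x y) \<le> (24 + 40*M) * sqrt (y - 2) * rhoR xi R x y)"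
  proof (intro allI impI ballI)
    fix R y :: real assume R: "2 < R" and y: "y \<in> {2..3}"
    interpret L2 xi xi' y R M
      by unfold_locales (use R y M in auto)
    have KK: "K = 24 + 40*M" by (simp add: K_def)
    show "\<exists>D. continuous_on {0..} D
         \<and> (\<forall>x\<ge>0. ((\<lambda>s. sqrt (iotaR xi R s y)) has_real_derivative D x) (at x within {0..}))
         \<and> (\<forall>x\<ge>0. 0 \<le> D x \<and> D x \<le> (24 + 40*M) * sqrt (y - 2) * gR xi R x y
                  \<and> 0 \<le> sqrt (iotaR xi R x y)
                  \<and> sqrt (iotaR xi R x y) \<le> (24 + 40*M) * sqrt (y - 2) * rhoR xi R x y)"
    proof (intro exI[of _ Df] conjI allI impI)
      show "continuous_on {0..} Df" by (rule D_cont)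
    next
      fix x :: real assume x: "0 \<le> x"
      show "((\<lambda>s. sqrt (iotaR xi R s y)) has_real_derivative Df x) (at x within {0..})"
        by (rule has_field_derivative_transform_within[OF deriv_sqrtI[OF x], where d=1])
           (use x in \<open>auto simp: iota_eq\<close>)
    next
      fix x :: real assume x: "0 \<le> x"
      show "0 \<le> Df x" using D_bound[OF x] by simp
      show "Df x \<le> (24 + 40*M) * sqrt (y - 2) * gR xi R x y"
        using D_bound[OF x] gR_eq[OF x] KK by simp
      show "0 \<le> sqrt (iotaR xi R x y)" using I_nonneg[OF x] iota_eq[OF x] by simp
      show "sqrt (iotaR xi R x y) \<le> (24 + 40*M) * sqrt (y - 2) * rhoR xi R x y"
        using sqrtI_bound[OF x] iota_eq[OF x] rho_eq[OF x] KK by simp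
    qed
  qed
  moreover have "0 < 24 + 40*M" using M by simp
  ultimately show ?thesis by blast
qed


end
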